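(* Let $a\neq b$ be decimal digits. No absolute prime has a decimal representation in which the digit $a$ occurs at least three times and the digit $b$ occurs at least twice.
   Context: For a positive integer $N$ with decimal representation $d_1d_2\dots d_n$ (digits $d_k\in\{0,\dots,9\}$, $d_1\neq 0$), a permutation of the digits of $N$ is any integer $\sum_{k=1}^{n} d_{\sigma(k)}10^{n-k}$ with $\sigma$ a permutation of $\{1,\dots,n\}$. $N$ is called an absolute prime if every integer obtained by a permutation of the digits of $N$ (including $N$ itself) is prime. *)

theory Defs
  imports Main "HOL-Library.Multiset" "HOL-Computational_Algebra.Primes" "HOL-Combinatorics.Permutations"
begin

fun digits_rev :: "nat \<Rightarrow> nat list" where
  "digits_rev n = (if n = 0 then [] else n mod 10 # digits_rev (n div 10))"

definition dec_digits :: "nat \<Rightarrow> nat list" where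
  "dec_digits n = rev (digits_rev n)"

definition digit_value :: "nat list \<Rightarrow> nat" where
  "digit_value ds = (\<Sum>k<length ds. ds ! k * 10 ^ (length ds - 1 - k))"

definition absolute_prime :: "nat \<Rightarrow> bool" where
  "absolute_prime N \<longleftrightarrow> N > 0 \<and>
     (\<forall>\<sigma>::nat \<Rightarrow> nat. \<sigma> permutes {..<length (dec_digits N)} \<longrightarrow>
        prime (digit_value (map (\<lambda>k. dec_digits N ! \<sigma> k) [0..<length (dec_digits N)])))"

end

theory Submission
  imports Defs "HOL-Library.Code_Binary_Nat"
begin

lemma digit_value_Nil[simp]: "digit_value [] = 0"
  by (simp add: digit_value_def)

lemma digit_value_Cons[simp]: "digit_value (x#xs) = x * 10 ^ length xs + digit_value xs"
proof -
  have "digit_value (x#xs) = (\<Sum>k<Suc (length xs). (x#xs) ! k * 10 ^ (length xs - k))"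
    by (simp add: digit_value_def)
  also have "\<dots> = x * 10 ^ length xs + (\<Sum>k<length xs. (x#xs) ! Suc k * 10 ^ (length xs - Suc k))"
    by (subst sum.lessThan_Suc_shift) simp
  also have "\<dots> = x * 10 ^ length xs + digit_value xs"
    by (simp add: digit_value_def)
  finally show ?thesis .
qed

lemma digit_value_append: "digit_value (xs @ ys) = digit_value xs * 10 ^ length ys + digit_value ys"
  by (induction xs) (auto simp: algebra_simps power_add)

lemma d5: "digit_value [x1,x2,x3,x4,x5] = x1*10000+x2*1000+x3*100+x4*10+x5"
  by simp

definition vals :: "nat \<Rightarrow> nat \<Rightarrow> nat list" where
  "vals a b = [b*10000+b*1000+a*100+a*10+a, b*10000+a*1000+b*100+a*10+a,
               b*10000+a*1000+a*100+b*10+a, b*10000+a*1000+a*100+a*10+b,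
               a*10000+b*1000+b*100+a*10+a, a*10000+b*1000+a*100+b*10+a,
               a*10000+b*1000+a*100+a*10+b, a*10000+a*1000+b*100+b*10+a,
               a*10000+a*1000+b*100+a*10+b, a*10000+a*1000+a*100+b*10+b]"

definition good :: "nat \<Rightarrow> nat \<Rightarrow> bool" where
  "good a b = list_all (\<lambda>x. list_ex (\<lambda>c. (8 \<le> c \<and> (5*x+c) mod 7 = 0) \<or>
       (6 \<le> c \<and> (c mod 2 = 0 \<or> c mod 5 = 0))) (vals a b)) [0..<7]"

lemma all_good: "list_all (\<lambda>a. list_all (\<lambda>b. a = b \<or> good a b) [0..<10]) [0..<10]"
  unfolding good_def vals_def by code_simp

lemma prime_dvdE: "prime (n::nat) \<Longrightarrow> d dvd n \<Longrightarrow> d \<noteq> 1 \<Longrightarrow> d = n"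
  using prime_nat_iff by blast

lemma not_prime_aux:
  fixes R c :: nat
  assumes p: "prime (R*100000 + c)"
    and h: "(8 \<le> c \<and> (5*(R mod 7)+c) mod 7 = 0) \<or> (6 \<le> c \<and> (c mod 2 = 0 \<or> c mod 5 = 0))"
  shows False
proof -
  let ?n = "R*100000 + c"
  have e7: "?n = (5*R + c) + 7*(R*14285)" by simp
  have e2: "?n = c + 2*(R*50000)" by simp
  have e5: "?n = c + 5*(R*20000)" by simp
  have m7: "?n mod 7 = (5*(R mod 7)+c) mod 7"
  proof -
    have "?n mod 7 = (5*R + c) mod 7" by (subst e7, rule mod_mult_self2)
    also have "\<dots> = (5*(R mod 7)+c) mod 7"
      by (metis mod_add_left_eq mod_mult_right_eq)
    finally show ?thesis .
  qed
  have m2: "?n mod 2 = c mod 2" by (subst e2, rule mod_mult_self2)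
  have m5: "?n mod 5 = c mod 5" by (subst e5, rule mod_mult_self2)
  show False
  proof (cases "8 \<le> c \<and> (5*(R mod 7)+c) mod 7 = 0")
    case True
    then have "7 dvd ?n" using m7 by (simp add: dvd_eq_mod_eq_0)
    then have "7 = ?n" by (rule prime_dvdE[OF p]) simp
    then show False using True by simp
  next
    case False
    with h have c6: "6 \<le> c" and d: "c mod 2 = 0 \<or> c mod 5 = 0" by auto
    from d show False
    proof
      assume "c mod 2 = 0"
      then have "2 dvd ?n" using m2 by (simp add: dvd_eq_mod_eq_0)
      then have "2 = ?n" by (rule prime_dvdE[OF p]) simp
      then show False using c6 by simp
    next
      assume "c mod 5 = 0"
      then have "5 dvd ?n" using m5 by (simp add: dvd_eq_mod_eq_0)
      then have "5 = ?n" by (rule prime_dvdE[OF p]) simp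
      then show False using c6 by simp
    qed
  qed
qed

lemma key:
  fixes a b R :: nat
  assumes "a \<le> 9" "b \<le> 9" "a \<noteq> b"
    and P: "\<And>w. mset w = {#a,a,a,b,b#} \<Longrightarrow> prime (R*100000 + digit_value w)"
  shows False
proof -
  have "a \<in> set [0..<10]" "b \<in> set [0..<10]" using assms(1,2) by auto
  then have g: "good a b" using all_good assms(3) unfolding list_all_iff by blast
  have "\<forall>c\<in>set (vals a b). prime (R*100000 + c)"
  proof -
    have m0: "mset [b,b,a,a,a] = {#a,a,a,b,b#}" by (simp add: add_mset_commute)
    note f0 = P[OF m0, unfolded d5]
    have m1: "mset [b,a,b,a,a] = {#a,a,a,b,b#}" by (simp add: add_mset_commute)
    note f1 = P[OF m1, unfolded d5]
    have m2: "mset [b,a,a,b,a] = {#a,a,a,b,b#}" by (simp add: add_mset_commute)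
    note f2 = P[OF m2, unfolded d5]
    have m3: "mset [b,a,a,a,b] = {#a,a,a,b,b#}" by (simp add: add_mset_commute)
    note f3 = P[OF m3, unfolded d5]
    have m4: "mset [a,b,b,a,a] = {#a,a,a,b,b#}" by (simp add: add_mset_commute)
    note f4 = P[OF m4, unfolded d5]
    have m5: "mset [a,b,a,b,a] = {#a,a,a,b,b#}" by (simp add: add_mset_commute)
    note f5 = P[OF m5, unfolded d5]
    have m6: "mset [a,b,a,a,b] = {#a,a,a,b,b#}" by (simp add: add_mset_commute)
    note f6 = P[OF m6, unfolded d5]
    have m7: "mset [a,a,b,b,a] = {#a,a,a,b,b#}" by (simp add: add_mset_commute)
    note f7 = P[OF m7, unfolded d5]
    have m8: "mset [a,a,b,a,b] = {#a,a,a,b,b#}" by (simp add: add_mset_commute)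
    note f8 = P[OF m8, unfolded d5]
    have m9: "mset [a,a,a,b,b] = {#a,a,a,b,b#}" by (simp add: add_mset_commute)
    note f9 = P[OF m9, unfolded d5]
    show ?thesis unfolding vals_def list.set Ball_def insert_iff empty_iff
      using f0 f1 f2 f3 f4 f5 f6 f7 f8 f9 by blast
  qed
  moreover have "R mod 7 \<in> set [0..<7]" by simp
  ultimately show False using g unfolding good_def list_all_iff list_ex_iff
    by (metis not_prime_aux)
qed

theorem lemma3:
  fixes a b N :: nat
  assumes "a \<le> 9" and "b \<le> 9" and "a \<noteq> b"
    and "count (mset (dec_digits N)) a \<ge> 3"
    and "count (mset (dec_digits N)) b \<ge> 2"
  shows "\<not> absolute_prime N"
proof
  assume ap: "absolute_prime N"
  define ds where "ds = dec_digits N"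
  have AP: "\<forall>\<sigma>::nat \<Rightarrow> nat. \<sigma> permutes {..<length ds} \<longrightarrow>
        prime (digit_value (map (\<lambda>k. ds ! \<sigma> k) [0..<length ds]))"
    using ap unfolding absolute_prime_def ds_def by blast
  have allp: "prime (digit_value ys)" if ys_eq: "mset ys = mset ds" for ys
  proof -
    obtain p where p: "p permutes {..<length ds}" "permute_list p ds = ys"
      using ys_eq by (rule mset_eq_permutation)
    have "prime (digit_value (map (\<lambda>k. ds ! p k) [0..<length ds]))"
      using AP p(1) by blast
    moreover have "map (\<lambda>k. ds ! p k) [0..<length ds] = ys"
      using p(2) unfolding permute_list_def .
    ultimately show ?thesis by simp
  qed
  have sub: "{#a,a,a,b,b#} \<subseteq># mset ds"
    unfolding subseteq_mset_def
  proof
    fix x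
    show "count {#a,a,a,b,b#} x \<le> count (mset ds) x"
    proof (cases "x = a")
      case True
      then show ?thesis using assms(3,4) unfolding ds_def by simp
    next
      case F: False
      show ?thesis
      proof (cases "x = b")
        case True
        then show ?thesis using assms(3,5) unfolding ds_def by simp
      next
        case False
        then show ?thesis using F by simp
      qed
    qed
  qed
  obtain r where r: "mset r = mset ds - {#a,a,a,b,b#}" using ex_mset by blast
  show False
  proof (rule key[OF assms(1-3)])
    fix w assume w: "mset w = {#a,a,a,b,b#}"
    have "size (mset w) = 5" unfolding w by simp
    then have lw: "length w = 5" by simp
    have "mset (r @ w) = (mset ds - {#a,a,a,b,b#}) + {#a,a,a,b,b#}"
      by (simp only: mset_append r w)
    also have "\<dots> = mset ds" by (rule subset_mset.diff_add[OF sub])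
    finally have "mset (r @ w) = mset ds" .
    then have "prime (digit_value (r @ w))" by (rule allp)
    moreover have "digit_value (r @ w) = digit_value r * 100000 + digit_value w"
      by (simp add: digit_value_append lw)
    ultimately show "prime (digit_value r * 100000 + digit_value w)" by simp
  qed
qed

end
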